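(* Let $N\ge 1$ and let $i,j,k\in\{1,\dots,N\}$. For an $N^3\times N^3$ matrix $\mathbf{M}$ with rows and columns indexed by three-letter words over $\{1,\dots,N\}$, let $\mathbf{M}_{[i,j,k]}$ denote the submatrix consisting of the rows and columns whose labels are rearrangements of the multiset $[i,j,k]$ (in lexicographic order), and let $n$ be the number of such rearrangements. Then for pairwise distinct indices $\alpha,\beta,\gamma$: (a) $(\mathbf{R}_{\beta\alpha}\otimes\mathbf{I}_N)_{[i,j,k]}(\mathbf{R}_{\alpha\beta}\otimes\mathbf{I}_N)_{[i,j,k]}=(\mathbf{I}_N\otimes\mathbf{R}_{\beta\alpha})_{[i,j,k]}(\mathbf{I}_N\otimes\mathbf{R}_{\alpha\beta})_{[i,j,k]}=\mathbf{I}_n$; (b) $(\mathbf{R}_{\gamma\beta}\otimes\mathbf{I}_N)_{[i,j,k]}(\mathbf{I}_N\otimes\mathbf{R}_{\gamma\alpha})_{[i,j,k]}(\mathbf{R}_{\beta\alpha}\otimes\mathbf{I}_N)_{[i,j,k]}=(\mathbf{I}_N\otimes\mathbf{R}_{\beta\alpha})_{[i,j,k]}(\mathbf{R}_{\gamma\alpha}\otimes\mathbf{I}_N)_{[i,j,k]}(\mathbf{I}_N\otimes\mathbf{R}_{\gamma\beta})_{[i,j,k]}$.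
   Context: Fix $0<p<1$, $q=1-p$. For nonzero complex $\xi_\alpha,\xi_\beta$ set $D=p+q\xi_\alpha\xi_\beta-\xi_\alpha$ and $S_{\beta\alpha}=-\frac{p+q\xi_\alpha\xi_\beta-\xi_\beta}{D}$, $P_{\beta\alpha}=\frac{(p-q\xi_\alpha)(\xi_\beta-1)}{D}$, $Q_{\beta\alpha}=\frac{(p-q\xi_\beta)(\xi_\alpha-1)}{D}$, $T_{\beta\alpha}=\frac{\xi_\beta-\xi_\alpha}{D}$. $\mathbf{R}_{\beta\alpha}$ is the $N^2\times N^2$ matrix with rows and columns indexed by two-letter words $ij$ over $\{1,\dots,N\}$ in lexicographic order, with entries $[\mathbf{R}_{\beta\alpha}]_{ij,kl}=S_{\beta\alpha}$ if $kl=ij$, $i=j$; $P_{\beta\alpha}$ if $kl=ij$, $i<j$; $Q_{\beta\alpha}$ if $kl=ij$, $i>j$; $pT_{\beta\alpha}$ if $kl=ji$, $i<j$; $qT_{\beta\alpha}$ if $kl=ji$, $i>j$; and $0$ otherwise. $\otimes$ is the Kronecker product, with rows/columns of $N^3\times N^3$ matrices indexed by three-letter words in lexicographic order. *)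

theory Defs
  imports Complex_Main "HOL-Library.List_Lexorder" "Jordan_Normal_Form.Matrix"
begin

text \<open>Two-letter words ij and three-letter words ijk over {1..N} are represented as
  lists of naturals; an N^2 x N^2 (resp. N^3 x N^3) matrix is represented by its entry
  function on words.  Lists are ordered lexicographically (List_Lexorder).\<close>

definition Dden :: "real \<Rightarrow> complex \<Rightarrow> complex \<Rightarrow> complex" where
  "Dden p xb xa = of_real p + of_real (1 - p) * xa * xb - xa"

definition Scoef :: "real \<Rightarrow> complex \<Rightarrow> complex \<Rightarrow> complex" where
  "Scoef p xb xa = - (of_real p + of_real (1 - p) * xa * xb - xb) / Dden p xb xa"

definition Pcoef :: "real \<Rightarrow> complex \<Rightarrow> complex \<Rightarrow> complex" where
  "Pcoef p xb xa = (of_real p - of_real (1 - p) * xa) * (xb - 1) / Dden p xb xa"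

definition Qcoef :: "real \<Rightarrow> complex \<Rightarrow> complex \<Rightarrow> complex" where
  "Qcoef p xb xa = (of_real p - of_real (1 - p) * xb) * (xa - 1) / Dden p xb xa"

definition Tcoef :: "real \<Rightarrow> complex \<Rightarrow> complex \<Rightarrow> complex" where
  "Tcoef p xb xa = (xb - xa) / Dden p xb xa"

text \<open>The R-matrix R_{beta alpha} (with xb = xi_beta, xa = xi_alpha), entry at row ij, column kl.\<close>
definition Rmat :: "real \<Rightarrow> complex \<Rightarrow> complex \<Rightarrow> nat list \<Rightarrow> nat list \<Rightarrow> complex" where
  "Rmat p xb xa w v =
     (let i = w ! 0; j = w ! 1 in
      if v = w then (if i = j then Scoef p xb xa else if i < j then Pcoef p xb xa else Qcoef p xb xa)
      else if v = [j, i] then (if i < j then of_real p * Tcoef p xb xa else of_real (1 - p) * Tcoef p xb xa)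
      else 0)"

definition kron_I_right :: "(nat list \<Rightarrow> nat list \<Rightarrow> complex) \<Rightarrow> nat list \<Rightarrow> nat list \<Rightarrow> complex" where
  "kron_I_right M w v = (if w ! 2 = v ! 2 then M (take 2 w) (take 2 v) else 0)"

definition kron_I_left :: "(nat list \<Rightarrow> nat list \<Rightarrow> complex) \<Rightarrow> nat list \<Rightarrow> nat list \<Rightarrow> complex" where
  "kron_I_left M w v = (if w ! 0 = v ! 0 then M (drop 1 w) (drop 1 v) else 0)"

definition rearr :: "nat \<Rightarrow> nat \<Rightarrow> nat \<Rightarrow> nat list list" where
  "rearr i j k = sorted_list_of_set {w. mset w = {#i, j, k#}}"

definition submat3 :: "(nat list \<Rightarrow> nat list \<Rightarrow> complex) \<Rightarrow> nat \<Rightarrow> nat \<Rightarrow> nat \<Rightarrow> complex mat" where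
  "submat3 M i j k = (let L = rearr i j k in
     mat (length L) (length L) (\<lambda>(r, c). M (L ! r) (L ! c)))"

end

theory Submission
  imports Defs
begin

lemma mset2: "mset w = {#y,z#} \<Longrightarrow> w = [y,z] \<or> w = [z,y]"
proof -
  assume h: "mset w = {#y,z#}"
  then have "length w = 2" by (metis size_mset size_add_mset size_empty One_nat_def Suc_1)
  then obtain u v where w: "w = [u,v]"
    by (metis (no_types, opaque_lifting) One_nat_def Suc_1 length_0_conv length_Suc_conv)
  with h show ?thesis
    by (auto simp: add_eq_conv_ex)
qed

lemma mset3: "mset w = {#x,y,z#} \<longleftrightarrow> w \<in> {[x,y,z],[x,z,y],[y,x,z],[y,z,x],[z,x,y],[z,y,x]}"
proof
  assume h: "mset w = {#x,y,z#}"
  then have "length w = 3" by (metis size_mset size_add_mset size_empty numeral_3_eq_3)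
  then obtain u w' where w: "w = u # w'" by (cases w) auto
  with h have "add_mset u (mset w') = add_mset x {#y,z#}" by simp
  then have "(u = x \<and> mset w' = {#y,z#}) \<or> (u = y \<and> mset w' = {#x,z#}) \<or> (u = z \<and> mset w' = {#x,y#})"
    by (auto simp: add_eq_conv_ex add_mset_commute)
  then show "w \<in> {[x,y,z],[x,z,y],[y,x,z],[y,z,x],[z,x,y],[z,y,x]}"
    using w mset2 by fastforce
qed (auto simp: add_mset_commute)

lemma rearr_eq: "rearr x y z = sorted_list_of_set (set [[x,y,z],[x,z,y],[y,x,z],[y,z,x],[z,x,y],[z,y,x]])"
  unfolding rearr_def mset3 Collect_mem_eq by simp

lemma r3: "a < b \<Longrightarrow> b < c \<Longrightarrow> rearr a b c = [[a,b,c],[a,c,b],[b,a,c],[b,c,a],[c,a,b],[c,b,a]]"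
  unfolding rearr_eq by (rule sorted_list_of_set.idem_if_sorted_distinct) auto

lemma r21: "a < b \<Longrightarrow> rearr a a b = [[a,a,b],[a,b,a],[b,a,a]]"
proof -
  assume "a<b"
  have "set [[a,a,b],[a,b,a],[a,a,b],[a,b,a],[b,a,a],[b,a,a]] = set [[a,a,b],[a,b,a],[b,a,a]]" by auto
  then show ?thesis unfolding rearr_eq using \<open>a<b\<close> by (simp only:) (rule sorted_list_of_set.idem_if_sorted_distinct; auto)
qed

lemma r12: "a < b \<Longrightarrow> rearr a b b = [[a,b,b],[b,a,b],[b,b,a]]"
proof -
  assume "a<b"
  have "set [[a,b,b],[a,b,b],[b,a,b],[b,b,a],[b,a,b],[b,b,a]] = set [[a,b,b],[b,a,b],[b,b,a]]" by auto
  then show ?thesis unfolding rearr_eq using \<open>a<b\<close> by (simp only:) (rule sorted_list_of_set.idem_if_sorted_distinct; auto)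
qed

lemma r111: "rearr a a a = [[a,a,a]]"
  unfolding rearr_eq by simp

definition Rn :: "complex \<Rightarrow> complex \<Rightarrow> complex \<Rightarrow> nat list \<Rightarrow> nat list \<Rightarrow> complex" where
  "Rn P y x w v =
     (let i = w ! 0; j = w ! 1 in
      if v = w then (if i = j then - (P + (1 - P) * x * y - y) else if i < j then (P - (1 - P) * x) * (y - 1) else (P - (1 - P) * y) * (x - 1))
      else if v = [j, i] then (if i < j then P * (y - x) else (1 - P) * (y - x))
      else 0)"

definition Dn :: "complex \<Rightarrow> complex \<Rightarrow> complex \<Rightarrow> complex" where
  "Dn P y x = P + (1 - P) * x * y - x"

definition NM :: "(nat list \<Rightarrow> nat list \<Rightarrow> complex) \<Rightarrow> nat list list \<Rightarrow> complex mat" where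
  "NM K L = mat (length L) (length L) (\<lambda>(r,c). K (L!r) (L!c))"

lemma Rmat_Rn: "Rmat p y x w v = Rn (of_real p) y x w v / Dden p y x"
  unfolding Rmat_def Rn_def Let_def Scoef_def Pcoef_def Qcoef_def Tcoef_def Dden_def
  by (simp add: of_real_diff)

lemma Dden_Dn: "Dden p y x = Dn (of_real p) y x"
  unfolding Dden_def Dn_def by (simp add: of_real_diff)

lemma mat_mult_mat: "mat n n f * mat n n g = mat n n (\<lambda>(r,c). \<Sum>t<n. f (r,t) * g (t,c))"
  by (rule eq_matI) (auto simp: scalar_prod_def atLeast0LessThan intro!: sum.cong)

lemma mat_eq_mat: "(\<And>r c. r < n \<Longrightarrow> c < n \<Longrightarrow> f (r,c) = g (r,c)) \<Longrightarrow> mat n n f = mat n n g"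
  by (rule eq_matI) auto

lemma one_mat_eq: "1\<^sub>m n = mat n n (\<lambda>(r,c). if r = c then 1 else 0)"
  by (rule eq_matI) auto

lemma smult_mat_mat: "d \<cdot>\<^sub>m mat n m f = mat n m (\<lambda>ij. d * f ij)"
  by (rule eq_matI) auto

lemma Rn_same: "Rn P y x [u,v] [u,v] = (if u = v then - (P + (1 - P) * x * y - y) else if u < v then (P - (1 - P) * x) * (y - 1) else (P - (1 - P) * y) * (x - 1))"
  unfolding Rn_def by simp

lemma Rn_swap: "u \<noteq> v \<Longrightarrow> Rn P y x [u,v] [v,u] = (if u < v then P * (y - x) else (1 - P) * (y - x))"
  unfolding Rn_def by auto

lemma Rn_other: "[u',v'] \<noteq> [u,v] \<Longrightarrow> [u',v'] \<noteq> [v,u] \<Longrightarrow> Rn P y x [u,v] [u',v'] = 0"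
proof -
  assume h1: "[u',v'] \<noteq> [u,v]" and h2: "[u',v'] \<noteq> [v,u]"
  have e: "[u,v]!0 = u" "[u,v]!1 = v" by simp_all
  show ?thesis by (simp only: Rn_def Let_def e h1 h2 if_False)
qed

lemma kR3: "kron_I_right M [u,v,t] [u',v',t'] = (if t = t' then M [u,v] [u',v'] else 0)"
  by (simp add: kron_I_right_def)

lemma kL3: "kron_I_left M [u,v,t] [u',v',t'] = (if u = u' then M [v,t] [v',t'] else 0)"
  by (simp add: kron_I_left_def)

lemmas evalsimps = kR3 kL3 Rn_same Rn_swap Rn_other nth_Cons_0 nth_Cons_Suc list.inject simp_thms
  if_True if_False mult_zero_left mult_zero_right add_0_left add_0_right split ball_simps
  case_prod_conv nat.inject nat.distinct mult_1_right mult_1_left Dn_def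

lemma sum6S: "(\<Sum>t<(6::nat). f t) = (f (0) + f (Suc 0) + f (Suc (Suc 0)) + f (Suc (Suc (Suc 0))) + f (Suc (Suc (Suc (Suc 0)))) + f (Suc (Suc (Suc (Suc (Suc 0))))) :: complex)"
  by (simp add: numeral_eq_Suc)
lemma sum3S: "(\<Sum>t<(3::nat). f t) = (f (0) + f (Suc 0) + f (Suc (Suc 0)) :: complex)"
  by (simp add: numeral_eq_Suc)
lemma sum1S: "(\<Sum>t<(1::nat). f t) = (f (0) :: complex)"
  by (simp add: numeral_eq_Suc)
lemma mat_eq_mat6: assumes "\<forall>r\<in>{0,Suc 0,Suc (Suc 0),Suc (Suc (Suc 0)),Suc (Suc (Suc (Suc 0))),Suc (Suc (Suc (Suc (Suc 0))))}. \<forall>c\<in>{0,Suc 0,Suc (Suc 0),Suc (Suc (Suc 0)),Suc (Suc (Suc (Suc 0))),Suc (Suc (Suc (Suc (Suc 0))))}. f (r,c) = g (r,c)"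
  shows "mat 6 6 f = mat 6 6 g"
proof (rule mat_eq_mat)
  fix r c :: nat
  assume r: "r < 6" and c: "c < 6"
  have S: "\<And>m::nat. m < 6 \<Longrightarrow> m \<in> {0,Suc 0,Suc (Suc 0),Suc (Suc (Suc 0)),Suc (Suc (Suc (Suc 0))),Suc (Suc (Suc (Suc (Suc 0))))}"
    by (auto simp: numeral_eq_Suc less_Suc_eq)
  show "f (r,c) = g (r,c)" using assms S[OF r] S[OF c] by blast
qed
lemma mat_eq_mat3: assumes "\<forall>r\<in>{0,Suc 0,Suc (Suc 0)}. \<forall>c\<in>{0,Suc 0,Suc (Suc 0)}. f (r,c) = g (r,c)"
  shows "mat 3 3 f = mat 3 3 g"
proof (rule mat_eq_mat)
  fix r c :: nat
  assume r: "r < 3" and c: "c < 3"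
  have S: "\<And>m::nat. m < 3 \<Longrightarrow> m \<in> {0,Suc 0,Suc (Suc 0)}"
    by (auto simp: numeral_eq_Suc less_Suc_eq)
  show "f (r,c) = g (r,c)" using assms S[OF r] S[OF c] by blast
qed
lemma mat_eq_mat1: assumes "\<forall>r\<in>{0}. \<forall>c\<in>{0}. f (r,c) = g (r,c)"
  shows "mat 1 1 f = mat 1 1 g"
proof (rule mat_eq_mat)
  fix r c :: nat
  assume r: "r < 1" and c: "c < 1"
  have S: "\<And>m::nat. m < 1 \<Longrightarrow> m \<in> {0}"
    by (auto simp: numeral_eq_Suc less_Suc_eq)
  show "f (r,c) = g (r,c)" using assms S[OF r] S[OF c] by blast
qed
lemma UR6:
  fixes x y P :: complex and a b c :: nat
  assumes "a < b" "b < c" "L = [[a,b,c],[a,c,b],[b,a,c],[b,c,a],[c,a,b],[c,b,a]]"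
  shows "NM (kron_I_right (Rn P y x)) L * NM (kron_I_right (Rn P x y)) L = (Dn P y x * Dn P x y) \<cdot>\<^sub>m 1\<^sub>m (length L)"
proof -
  have len: "length L = 6" using assms(3) by simp
  have o: "a < c" "(a = b) = False" "(b = a) = False" "(b = c) = False" "(c = b) = False" "(a = c) = False" "(c = a) = False" "(b < a) = False" "(c < b) = False" "(c < a) = False" "a < b" "b < c"
    using assms by auto
  show ?thesis
  unfolding NM_def mat_mult_mat len one_mat_eq smult_mat_mat
  apply (rule mat_eq_mat6)
  apply (simp only: ball_simps)
  apply (intro conjI)
  apply (simp_all only: sum6S assms(3) evalsimps o not_False_eq_True)
  apply ((simp_all add: algebra_simps)?)
  done
qed

lemma UL6:
  fixes x y P :: complex and a b c :: nat
  assumes "a < b" "b < c" "L = [[a,b,c],[a,c,b],[b,a,c],[b,c,a],[c,a,b],[c,b,a]]"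
  shows "NM (kron_I_left (Rn P y x)) L * NM (kron_I_left (Rn P x y)) L = (Dn P y x * Dn P x y) \<cdot>\<^sub>m 1\<^sub>m (length L)"
proof -
  have len: "length L = 6" using assms(3) by simp
  have o: "a < c" "(a = b) = False" "(b = a) = False" "(b = c) = False" "(c = b) = False" "(a = c) = False" "(c = a) = False" "(b < a) = False" "(c < b) = False" "(c < a) = False" "a < b" "b < c"
    using assms by auto
  show ?thesis
  unfolding NM_def mat_mult_mat len one_mat_eq smult_mat_mat
  apply (rule mat_eq_mat6)
  apply (simp only: ball_simps)
  apply (intro conjI)
  apply (simp_all only: sum6S assms(3) evalsimps o not_False_eq_True)
  apply ((simp_all add: algebra_simps)?)
  done
qed

lemma YB6:
  fixes x y z P :: complex and a b c :: nat
  assumes "a < b" "b < c" "L = [[a,b,c],[a,c,b],[b,a,c],[b,c,a],[c,a,b],[c,b,a]]"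
  shows "NM (kron_I_right (Rn P z y)) L * NM (kron_I_left (Rn P z x)) L * NM (kron_I_right (Rn P y x)) L
       = NM (kron_I_left (Rn P y x)) L * NM (kron_I_right (Rn P z x)) L * NM (kron_I_left (Rn P z y)) L"
proof -
  have len: "length L = 6" using assms(3) by simp
  have o: "a < c" "(a = b) = False" "(b = a) = False" "(b = c) = False" "(c = b) = False" "(a = c) = False" "(c = a) = False" "(b < a) = False" "(c < b) = False" "(c < a) = False" "a < b" "b < c"
    using assms by auto
  show ?thesis
  unfolding NM_def mat_mult_mat len
  apply (rule mat_eq_mat6)
  apply (simp only: ball_simps)
  apply (intro conjI)
  apply (simp_all only: sum6S assms(3) evalsimps o not_False_eq_True)
  apply ((simp_all add: algebra_simps)?)
  done
qed

lemma UR21: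
  fixes x y P :: complex and a b c :: nat
  assumes "a < b" "L = [[a,a,b],[a,b,a],[b,a,a]]"
  shows "NM (kron_I_right (Rn P y x)) L * NM (kron_I_right (Rn P x y)) L = (Dn P y x * Dn P x y) \<cdot>\<^sub>m 1\<^sub>m (length L)"
proof -
  have len: "length L = 3" using assms(2) by simp
  have o: "(a = b) = False" "(b = a) = False" "(b < a) = False" "a < b"
    using assms by auto
  show ?thesis
  unfolding NM_def mat_mult_mat len one_mat_eq smult_mat_mat
  apply (rule mat_eq_mat3)
  apply (simp only: ball_simps)
  apply (intro conjI)
  apply (simp_all only: sum3S assms(2) evalsimps o not_False_eq_True)
  apply ((simp_all add: algebra_simps)?)
  done
qed

lemma UL21:
  fixes x y P :: complex and a b c :: nat
  assumes "a < b" "L = [[a,a,b],[a,b,a],[b,a,a]]"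
  shows "NM (kron_I_left (Rn P y x)) L * NM (kron_I_left (Rn P x y)) L = (Dn P y x * Dn P x y) \<cdot>\<^sub>m 1\<^sub>m (length L)"
proof -
  have len: "length L = 3" using assms(2) by simp
  have o: "(a = b) = False" "(b = a) = False" "(b < a) = False" "a < b"
    using assms by auto
  show ?thesis
  unfolding NM_def mat_mult_mat len one_mat_eq smult_mat_mat
  apply (rule mat_eq_mat3)
  apply (simp only: ball_simps)
  apply (intro conjI)
  apply (simp_all only: sum3S assms(2) evalsimps o not_False_eq_True)
  apply ((simp_all add: algebra_simps)?)
  done
qed

lemma YB21:
  fixes x y z P :: complex and a b c :: nat
  assumes "a < b" "L = [[a,a,b],[a,b,a],[b,a,a]]"
  shows "NM (kron_I_right (Rn P z y)) L * NM (kron_I_left (Rn P z x)) L * NM (kron_I_right (Rn P y x)) L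
       = NM (kron_I_left (Rn P y x)) L * NM (kron_I_right (Rn P z x)) L * NM (kron_I_left (Rn P z y)) L"
proof -
  have len: "length L = 3" using assms(2) by simp
  have o: "(a = b) = False" "(b = a) = False" "(b < a) = False" "a < b"
    using assms by auto
  show ?thesis
  unfolding NM_def mat_mult_mat len
  apply (rule mat_eq_mat3)
  apply (simp only: ball_simps)
  apply (intro conjI)
  apply (simp_all only: sum3S assms(2) evalsimps o not_False_eq_True)
  apply ((simp_all add: algebra_simps)?)
  done
qed

lemma UR12:
  fixes x y P :: complex and a b c :: nat
  assumes "a < b" "L = [[a,b,b],[b,a,b],[b,b,a]]"
  shows "NM (kron_I_right (Rn P y x)) L * NM (kron_I_right (Rn P x y)) L = (Dn P y x * Dn P x y) \<cdot>\<^sub>m 1\<^sub>m (length L)"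
proof -
  have len: "length L = 3" using assms(2) by simp
  have o: "(a = b) = False" "(b = a) = False" "(b < a) = False" "a < b"
    using assms by auto
  show ?thesis
  unfolding NM_def mat_mult_mat len one_mat_eq smult_mat_mat
  apply (rule mat_eq_mat3)
  apply (simp only: ball_simps)
  apply (intro conjI)
  apply (simp_all only: sum3S assms(2) evalsimps o not_False_eq_True)
  apply ((simp_all add: algebra_simps)?)
  done
qed

lemma UL12:
  fixes x y P :: complex and a b c :: nat
  assumes "a < b" "L = [[a,b,b],[b,a,b],[b,b,a]]"
  shows "NM (kron_I_left (Rn P y x)) L * NM (kron_I_left (Rn P x y)) L = (Dn P y x * Dn P x y) \<cdot>\<^sub>m 1\<^sub>m (length L)"
proof -
  have len: "length L = 3" using assms(2) by simp
  have o: "(a = b) = False" "(b = a) = False" "(b < a) = False" "a < b"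
    using assms by auto
  show ?thesis
  unfolding NM_def mat_mult_mat len one_mat_eq smult_mat_mat
  apply (rule mat_eq_mat3)
  apply (simp only: ball_simps)
  apply (intro conjI)
  apply (simp_all only: sum3S assms(2) evalsimps o not_False_eq_True)
  apply ((simp_all add: algebra_simps)?)
  done
qed

lemma YB12:
  fixes x y z P :: complex and a b c :: nat
  assumes "a < b" "L = [[a,b,b],[b,a,b],[b,b,a]]"
  shows "NM (kron_I_right (Rn P z y)) L * NM (kron_I_left (Rn P z x)) L * NM (kron_I_right (Rn P y x)) L
       = NM (kron_I_left (Rn P y x)) L * NM (kron_I_right (Rn P z x)) L * NM (kron_I_left (Rn P z y)) L"
proof -
  have len: "length L = 3" using assms(2) by simp
  have o: "(a = b) = False" "(b = a) = False" "(b < a) = False" "a < b"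
    using assms by auto
  show ?thesis
  unfolding NM_def mat_mult_mat len
  apply (rule mat_eq_mat3)
  apply (simp only: ball_simps)
  apply (intro conjI)
  apply (simp_all only: sum3S assms(2) evalsimps o not_False_eq_True)
  apply ((simp_all add: algebra_simps)?)
  done
qed

lemma UR1:
  fixes x y P :: complex and a b c :: nat
  assumes "L = [[a,a,a]]"
  shows "NM (kron_I_right (Rn P y x)) L * NM (kron_I_right (Rn P x y)) L = (Dn P y x * Dn P x y) \<cdot>\<^sub>m 1\<^sub>m (length L)"
proof -
  have len: "length L = 1" using assms(1) by simp
  have o: "True" by simp
  show ?thesis
  unfolding NM_def mat_mult_mat len one_mat_eq smult_mat_mat
  apply (rule mat_eq_mat1)
  apply (simp only: ball_simps)
  apply (intro conjI)
  apply (simp_all only: sum1S assms(1) evalsimps o not_False_eq_True)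
  apply ((simp_all add: algebra_simps)?)
  done
qed

lemma UL1:
  fixes x y P :: complex and a b c :: nat
  assumes "L = [[a,a,a]]"
  shows "NM (kron_I_left (Rn P y x)) L * NM (kron_I_left (Rn P x y)) L = (Dn P y x * Dn P x y) \<cdot>\<^sub>m 1\<^sub>m (length L)"
proof -
  have len: "length L = 1" using assms(1) by simp
  have o: "True" by simp
  show ?thesis
  unfolding NM_def mat_mult_mat len one_mat_eq smult_mat_mat
  apply (rule mat_eq_mat1)
  apply (simp only: ball_simps)
  apply (intro conjI)
  apply (simp_all only: sum1S assms(1) evalsimps o not_False_eq_True)
  apply ((simp_all add: algebra_simps)?)
  done
qed

lemma YB1:
  fixes x y z P :: complex and a b c :: nat
  assumes "L = [[a,a,a]]"
  shows "NM (kron_I_right (Rn P z y)) L * NM (kron_I_left (Rn P z x)) L * NM (kron_I_right (Rn P y x)) L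
       = NM (kron_I_left (Rn P y x)) L * NM (kron_I_right (Rn P z x)) L * NM (kron_I_left (Rn P z y)) L"
proof -
  have len: "length L = 1" using assms(1) by simp
  have o: "True" by simp
  show ?thesis
  unfolding NM_def mat_mult_mat len
  apply (rule mat_eq_mat1)
  apply (simp only: ball_simps)
  apply (intro conjI)
  apply (simp_all only: sum1S assms(1) evalsimps o not_False_eq_True)
  apply ((simp_all add: algebra_simps)?)
  done
qed

lemma NM_carrier: "NM K L \<in> carrier_mat (length L) (length L)"
  unfolding NM_def by simp

lemma submat_NM_R: "submat3 (kron_I_right (Rmat p y x)) i j k = (1 / Dden p y x) \<cdot>\<^sub>m NM (kron_I_right (Rn (of_real p) y x)) (rearr i j k)"
  unfolding submat3_def NM_def Let_def smult_mat_mat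
  by (rule mat_eq_mat) (simp add: kron_I_right_def Rmat_Rn)

lemma submat_NM_L: "submat3 (kron_I_left (Rmat p y x)) i j k = (1 / Dden p y x) \<cdot>\<^sub>m NM (kron_I_left (Rn (of_real p) y x)) (rearr i j k)"
  unfolding submat3_def NM_def Let_def smult_mat_mat
  by (rule mat_eq_mat) (simp add: kron_I_left_def Rmat_Rn)

lemma smult_smult_m: "a \<cdot>\<^sub>m (b \<cdot>\<^sub>m A) = (a * b :: complex) \<cdot>\<^sub>m A"
  by (rule eq_matI) auto

lemma one_smult_m: "(1::complex) \<cdot>\<^sub>m A = A"
  by (rule eq_matI) auto

lemma pair_smult:
  fixes A B :: "complex mat"
  assumes "A \<in> carrier_mat n n" "B \<in> carrier_mat n n"
  shows "(a \<cdot>\<^sub>m A) * (b \<cdot>\<^sub>m B) = (a * b) \<cdot>\<^sub>m (A * B)"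
  using assms by (simp add: mult_smult_assoc_mat[of _ n n _ n] mult_smult_distrib[of _ n n _ n] smult_smult_m mult.commute)

lemma trip_smult:
  fixes A B C :: "complex mat"
  assumes "A \<in> carrier_mat n n" "B \<in> carrier_mat n n" "C \<in> carrier_mat n n"
  shows "(a \<cdot>\<^sub>m A) * (b \<cdot>\<^sub>m B) * (c \<cdot>\<^sub>m C) = (a * b * c) \<cdot>\<^sub>m (A * B * C)"
proof -
  have "(a \<cdot>\<^sub>m A) * (b \<cdot>\<^sub>m B) = (a * b) \<cdot>\<^sub>m (A * B)" using assms pair_smult by blast
  moreover have "A * B \<in> carrier_mat n n" using assms by simp
  ultimately show ?thesis using assms(3) pair_smult by metis
qed

lemma main_gen:
  fixes xa xb xg :: complex
  assumes UR: "\<And>x y. NM (kron_I_right (Rn P y x)) L * NM (kron_I_right (Rn P x y)) L = (Dn P y x * Dn P x y) \<cdot>\<^sub>m 1\<^sub>m (length L)"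
    and UL: "\<And>x y. NM (kron_I_left (Rn P y x)) L * NM (kron_I_left (Rn P x y)) L = (Dn P y x * Dn P x y) \<cdot>\<^sub>m 1\<^sub>m (length L)"
    and YB: "\<And>x y z. NM (kron_I_right (Rn P z y)) L * NM (kron_I_left (Rn P z x)) L * NM (kron_I_right (Rn P y x)) L
       = NM (kron_I_left (Rn P y x)) L * NM (kron_I_right (Rn P z x)) L * NM (kron_I_left (Rn P z y)) L"
    and RL: "rearr i j k = L" and PP: "P = of_real p"
  shows "(Dden p xb xa \<noteq> 0 \<and> Dden p xa xb \<noteq> 0 \<longrightarrow>
           submat3 (kron_I_right (Rmat p xb xa)) i j k
             * submat3 (kron_I_right (Rmat p xa xb)) i j k
             = 1\<^sub>m (length (rearr i j k))
         \<and> submat3 (kron_I_left (Rmat p xb xa)) i j k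
             * submat3 (kron_I_left (Rmat p xa xb)) i j k
             = 1\<^sub>m (length (rearr i j k)))
       \<and> (Dden p xg xb \<noteq> 0 \<and> Dden p xg xa \<noteq> 0 \<and> Dden p xb xa \<noteq> 0 \<longrightarrow>
           submat3 (kron_I_right (Rmat p xg xb)) i j k
             * submat3 (kron_I_left (Rmat p xg xa)) i j k
             * submat3 (kron_I_right (Rmat p xb xa)) i j k
           = submat3 (kron_I_left (Rmat p xb xa)) i j k
             * submat3 (kron_I_right (Rmat p xg xa)) i j k
             * submat3 (kron_I_left (Rmat p xg xb)) i j k)"
proof (intro conjI impI)
  let ?n = "length L"
  have C: "\<And>K. NM K L \<in> carrier_mat ?n ?n" by (rule NM_carrier)
  have fin: "\<And>d1 d2. d1 \<noteq> 0 \<Longrightarrow> d2 \<noteq> 0 \<Longrightarrow> (1 / d1 * (1 / d2)) \<cdot>\<^sub>m ((d1 * d2) \<cdot>\<^sub>m 1\<^sub>m ?n) = (1\<^sub>m ?n :: complex mat)"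
    by (simp add: smult_smult_m one_smult_m)
  assume H: "Dden p xb xa \<noteq> 0 \<and> Dden p xa xb \<noteq> 0"
  show "submat3 (kron_I_right (Rmat p xb xa)) i j k * submat3 (kron_I_right (Rmat p xa xb)) i j k = 1\<^sub>m (length (rearr i j k))"
    unfolding submat_NM_R RL pair_smult[OF C C] PP[symmetric] UR
    using H fin by (simp add: Dden_Dn PP)
  show "submat3 (kron_I_left (Rmat p xb xa)) i j k * submat3 (kron_I_left (Rmat p xa xb)) i j k = 1\<^sub>m (length (rearr i j k))"
    unfolding submat_NM_L RL pair_smult[OF C C] PP[symmetric] UL
    using H fin by (simp add: Dden_Dn PP)
next
  let ?n = "length L"
  have C: "\<And>K. NM K L \<in> carrier_mat ?n ?n" by (rule NM_carrier)
  show "submat3 (kron_I_right (Rmat p xg xb)) i j k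
             * submat3 (kron_I_left (Rmat p xg xa)) i j k
             * submat3 (kron_I_right (Rmat p xb xa)) i j k
           = submat3 (kron_I_left (Rmat p xb xa)) i j k
             * submat3 (kron_I_right (Rmat p xg xa)) i j k
             * submat3 (kron_I_left (Rmat p xg xb)) i j k"
    unfolding submat_NM_R submat_NM_L RL trip_smult[OF C C C] PP[symmetric] YB
    by (simp add: ac_simps)
qed

lemma rearr_cases:
  obtains (c6) a b c where "a < b" "b < c" "rearr i j k = [[a,b,c],[a,c,b],[b,a,c],[b,c,a],[c,a,b],[c,b,a]]"
  | (c21) a b where "a < b" "rearr i j k = [[a,a,b],[a,b,a],[b,a,a]]"
  | (c12) a b where "a < b" "rearr i j k = [[a,b,b],[b,a,b],[b,b,a]]"
  | (c1) a where "rearr i j k = [[a,a,a]]"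
proof -
  have "length (sort [i,j,k]) = 3" by simp
  then have "\<exists>a b c. sort [i,j,k] = [a,b,c]"
    by (auto simp: numeral_eq_Suc length_Suc_conv)
  then obtain a b c where abc: "sort [i,j,k] = [a,b,c]" by blast
  have "sorted [a,b,c]" by (metis abc sorted_sort)
  then have o: "a \<le> b" "b \<le> c" by auto
  have "mset [a,b,c] = mset [i,j,k]" by (metis abc mset_sort)
  then have R: "rearr i j k = rearr a b c" unfolding rearr_def by simp
  show ?thesis
  proof (cases "a < b")
    case True
    show ?thesis
    proof (cases "b < c")
      case True
      then show ?thesis using c6 \<open>a < b\<close> R r3 by metis
    next
      case False
      then have "b = c" using o by simp
      then show ?thesis using c12 \<open>a < b\<close> R r12 by metis
    qed
  next
    case False
    then have ab: "a = b" using o by simp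
    show ?thesis
    proof (cases "b < c")
      case True
      then show ?thesis using c21 ab R r21 by metis
    next
      case False
      then have "b = c" using o by simp
      then show ?thesis using c1 ab R r111 by metis
    qed
  qed
qed

theorem mainTheorem3:
  fixes p :: real and N i j k :: nat and xi :: "'idx \<Rightarrow> complex" and \<alpha> \<beta> \<gamma> :: 'idx
  assumes "0 < p" "p < 1" "N \<ge> 1"
    and "i \<in> {1..N}" "j \<in> {1..N}" "k \<in> {1..N}"
    and "\<alpha> \<noteq> \<beta>" "\<beta> \<noteq> \<gamma>" "\<alpha> \<noteq> \<gamma>"
    and "xi \<alpha> \<noteq> 0" "xi \<beta> \<noteq> 0" "xi \<gamma> \<noteq> 0"
  shows "(Dden p (xi \<beta>) (xi \<alpha>) \<noteq> 0 \<and> Dden p (xi \<alpha>) (xi \<beta>) \<noteq> 0 \<longrightarrow>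
           submat3 (kron_I_right (Rmat p (xi \<beta>) (xi \<alpha>))) i j k
             * submat3 (kron_I_right (Rmat p (xi \<alpha>) (xi \<beta>))) i j k
             = 1\<^sub>m (length (rearr i j k))
         \<and> submat3 (kron_I_left (Rmat p (xi \<beta>) (xi \<alpha>))) i j k
             * submat3 (kron_I_left (Rmat p (xi \<alpha>) (xi \<beta>))) i j k
             = 1\<^sub>m (length (rearr i j k)))
       \<and> (Dden p (xi \<gamma>) (xi \<beta>) \<noteq> 0 \<and> Dden p (xi \<gamma>) (xi \<alpha>) \<noteq> 0 \<and> Dden p (xi \<beta>) (xi \<alpha>) \<noteq> 0 \<longrightarrow>
           submat3 (kron_I_right (Rmat p (xi \<gamma>) (xi \<beta>))) i j k
             * submat3 (kron_I_left (Rmat p (xi \<gamma>) (xi \<alpha>))) i j k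
             * submat3 (kron_I_right (Rmat p (xi \<beta>) (xi \<alpha>))) i j k
           = submat3 (kron_I_left (Rmat p (xi \<beta>) (xi \<alpha>))) i j k
             * submat3 (kron_I_right (Rmat p (xi \<gamma>) (xi \<alpha>))) i j k
             * submat3 (kron_I_left (Rmat p (xi \<gamma>) (xi \<beta>))) i j k)"
proof (cases i j k rule: rearr_cases)
  case (c6 a b c)
  show ?thesis
    by (rule main_gen[OF UR6[OF c6(1,2) refl] UL6[OF c6(1,2) refl] YB6[OF c6(1,2) refl] c6(3) refl])
next
  case (c21 a b)
  show ?thesis
    by (rule main_gen[OF UR21[OF c21(1) refl] UL21[OF c21(1) refl] YB21[OF c21(1) refl] c21(2) refl])
next
  case (c12 a b)
  show ?thesis
    by (rule main_gen[OF UR12[OF c12(1) refl] UL12[OF c12(1) refl] YB12[OF c12(1) refl] c12(2) refl])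
next
  case (c1 a)
  show ?thesis
    by (rule main_gen[OF UR1[OF refl] UL1[OF refl] YB1[OF refl] c1 refl])
qed

end
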